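(* Let $\sigma\in\{1,-1\}$, $n\ge 2$, $m_1,\dots,m_n>0$, $M=\sum_{j=1}^n m_j$, and let $q_k(t)=p(t+k)$, $k=1,\dots,n$, be an equally spaced choreographic solution, with $p$ of period $n$, of $$\ddot q_k=\sum_{j=1,\,j\neq k}^{n}\frac{m_j\big(q_j-\sigma(q_k\odot q_j)q_k\big)}{\big(\sigma-\sigma(q_k\odot q_j)^2\big)^{3/2}}-\sigma(\dot q_k\odot\dot q_k)q_k,\qquad k\in\{1,\dots,n\}.$$ Then for all $k\in\{1,\dots,n\}$ and all $t$, $$0=\sum_{j=1}^{n-1}\frac{\left(m_{j+k}-\frac Mn\right)\Big(p(t+j)-\sigma\big(p(t+j)\odot p(t)\big)p(t)\Big)}{\Big(\sigma-\sigma\big(p(t+j)\odot p(t)\big)^2\Big)^{3/2}}.$$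
   Context: $\mathbb{M}^2_\sigma=\{(x_1,x_2,x_3)\in\mathbb{R}^3: x_1^2+x_2^2+\sigma x_3^2=\sigma\}$ and $x\odot y=x_1y_1+x_2y_2+\sigma x_3y_3$; $p:\mathbb{R}\to\mathbb{M}^2_\sigma$ is twice continuously differentiable. Masses are indexed cyclically: $m_{k+Kn}=m_k$ for $k\in\{1,\dots,n\}$, $K\in\mathbb{Z}$. (Equal spacing has been normalized so that $h_{k+1}-h_k=1$ and the period of $p$ is $n$.) *)

theory Defs
  imports "HOL-Analysis.Analysis"
begin

definition odot :: "real \<Rightarrow> real^3 \<Rightarrow> real^3 \<Rightarrow> real" where
  "odot \<sigma> x y = x$1 * y$1 + x$2 * y$2 + \<sigma> * x$3 * y$3"

definition Msurf :: "real \<Rightarrow> (real^3) set" where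
  "Msurf \<sigma> = {x. (x$1)^2 + (x$2)^2 + \<sigma> * (x$3)^2 = \<sigma>}"

text \<open>Cyclic indexing of masses: m_{k+Kn} = m_k for k in 1..n (used for indices >= 1).\<close>
definition mcyc :: "nat \<Rightarrow> (nat \<Rightarrow> real) \<Rightarrow> nat \<Rightarrow> real" where
  "mcyc n m i = m ((i - 1) mod n + 1)"

end

theory Submission
  imports Defs
begin

lemma div_scaleR: "(a / d) *\<^sub>R (v::'a::real_vector) = a *\<^sub>R (inverse d *\<^sub>R v)"
  by (simp add: divide_inverse)

lemma odot_sym: "odot s x y = odot s y x"
  by (simp add: odot_def algebra_simps)

lemma per_mult:
  assumes "\<And>t. p (t + real n) = (p t :: 'a)"
  shows "p (t + real (q * n)) = p t"
proof (induction q arbitrary: t)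
  case 0 then show ?case by simp
next
  case (Suc q)
  have "p (t + real (Suc q * n)) = p ((t + real (q*n)) + real n)" by (simp add: algebra_simps)
  also have "\<dots> = p t" using assms Suc by simp
  finally show ?case .
qed

lemma mcyc_window:
  assumes "n > 0"
  shows "(\<Sum>k\<in>{1..n}. mcyc n m (l + k)) = (\<Sum>i\<in>{1..n}. m i)"
proof (induction l)
  case 0
  have "\<And>k. k \<in> {1..n} \<Longrightarrow> mcyc n m k = m k"
    unfolding mcyc_def using assms by (auto simp: mod_less)
  then show ?case by simp
next
  case (Suc l)
  let ?f = "\<lambda>i. mcyc n m (l + i)"
  have "(\<Sum>k\<in>{1..n}. mcyc n m (Suc l + k)) = (\<Sum>k\<in>{1..n}. ?f (Suc k))" by simp
  also have "\<dots> = (\<Sum>k\<in>{Suc 1..Suc n}. ?f k)"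
    by (rule sum.shift_bounds_cl_Suc_ivl[symmetric])
  also have "\<dots> = (\<Sum>k\<in>{1..Suc n}. ?f k) - ?f 1"
    using assms by (simp add: sum.atLeast_Suc_atMost)
  also have "\<dots> = (\<Sum>k\<in>{1..n}. ?f k) + ?f (Suc n) - ?f 1"
    by simp
  also have "?f (Suc n) = ?f 1"
    unfolding mcyc_def by simp
  finally have "(\<Sum>k\<in>{1..n}. mcyc n m (Suc l + k)) = (\<Sum>k\<in>{1..n}. ?f k)" by simp
  then show ?case using Suc.IH by simp
qed

theorem lemma3:
  fixes \<sigma> :: real and n :: nat and m :: "nat \<Rightarrow> real"
    and p p' p'' :: "real \<Rightarrow> real^3"
  assumes sigma: "\<sigma> = 1 \<or> \<sigma> = -1"
    and n2: "n \<ge> 2"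
    and mpos: "\<And>j. j \<in> {1..n} \<Longrightarrow> m j > 0"
    and onM: "\<And>t. p t \<in> Msurf \<sigma>"
    and d1: "\<And>t. (p has_vector_derivative p' t) (at t)"
    and d2: "\<And>t. (p' has_vector_derivative p'' t) (at t)"
    and cont2: "continuous_on UNIV p''"
    and period: "\<And>t. p (t + real n) = p t"
    and nocoll: "\<And>t k j. k \<in> {1..n} \<Longrightarrow> j \<in> {1..n} \<Longrightarrow> j \<noteq> k \<Longrightarrow>
        \<sigma> - \<sigma> * (odot \<sigma> (p (t + real k)) (p (t + real j)))^2 > 0"
    and ode: "\<And>t k. k \<in> {1..n} \<Longrightarrow>
        p'' (t + real k) =
          (\<Sum>j\<in>{1..n} - {k}.
             (m j / (\<sigma> - \<sigma> * (odot \<sigma> (p (t + real k)) (p (t + real j)))^2) powr (3/2)) *\<^sub>R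
             (p (t + real j) - (\<sigma> * odot \<sigma> (p (t + real k)) (p (t + real j))) *\<^sub>R p (t + real k)))
          - (\<sigma> * odot \<sigma> (p' (t + real k)) (p' (t + real k))) *\<^sub>R p (t + real k)"
  shows "\<forall>k\<in>{1..n}. \<forall>t. 0 =
      (\<Sum>j\<in>{1..n-1}.
         ((mcyc n m (j + k) - (\<Sum>i\<in>{1..n}. m i) / real n) /
            (\<sigma> - \<sigma> * (odot \<sigma> (p (t + real j)) (p t))^2) powr (3/2)) *\<^sub>R
         (p (t + real j) - (\<sigma> * odot \<sigma> (p (t + real j)) (p t)) *\<^sub>R p t))"
proof -
  have npos: "n > 0" using n2 by simp
  define G where "G s l = inverse ((\<sigma> - \<sigma> * (odot \<sigma> (p (s + real l)) (p s))^2) powr (3/2)) *\<^sub>R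
         (p (s + real l) - (\<sigma> * odot \<sigma> (p (s + real l)) (p s)) *\<^sub>R p s)" for s l
  define A where "A k s = (\<Sum>l\<in>{1..n-1}. mcyc n m (l+k) *\<^sub>R G s l)" for k s
  define M where "M = (\<Sum>i\<in>{1..n}. m i)"
  have key: "p'' s + (\<sigma> * odot \<sigma> (p' s) (p' s)) *\<^sub>R p s = A k s" if k: "k \<in> {1..n}" for k s
  proof -
    have e: "p'' s = (\<Sum>j\<in>{1..n} - {k}.
             (m j / (\<sigma> - \<sigma> * (odot \<sigma> (p s) (p (s - real k + real j)))^2) powr (3/2)) *\<^sub>R
             (p (s - real k + real j) - (\<sigma> * odot \<sigma> (p s) (p (s - real k + real j))) *\<^sub>R p s))
          - (\<sigma> * odot \<sigma> (p' s) (p' s)) *\<^sub>R p s"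
      using ode[of k "s - real k", OF k] unfolding diff_add_cancel .
    have h: "A k s = (\<Sum>j\<in>{1..n} - {k}.
             (m j / (\<sigma> - \<sigma> * (odot \<sigma> (p s) (p (s - real k + real j)))^2) powr (3/2)) *\<^sub>R
             (p (s - real k + real j) - (\<sigma> * odot \<sigma> (p s) (p (s - real k + real j))) *\<^sub>R p s))"
      unfolding A_def
    proof (rule sum.reindex_bij_witness[of _ "\<lambda>a. if k < a then a - k else a + n - k"
              "\<lambda>l. if l + k \<le> n then l + k else l + k - n"])
      fix b assume b: "b \<in> {1..n-1}"
      show "(if k < (if b + k \<le> n then b + k else b + k - n) then (if b + k \<le> n then b + k else b + k - n) - k
          else (if b + k \<le> n then b + k else b + k - n) + n - k) = b"
      proof (cases "b + k \<le> n")
        case True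
        then show ?thesis using b by simp
      next
        case False
        moreover have "b \<le> n - 1" using b by simp
        ultimately have "\<not> k < b + k - n" by arith
        then show ?thesis using False b k by simp
      qed
    next
      fix b assume "b \<in> {1..n-1}"
      then show "(if b + k \<le> n then b + k else b + k - n) \<in> {1..n} - {k}" using k by auto
    next
      fix a assume "a \<in> {1..n} - {k}"
      then show "(if (if k < a then a - k else a + n - k) + k \<le> n then (if k < a then a - k else a + n - k) + k
               else (if k < a then a - k else a + n - k) + k - n) = a"
        using k by auto
    next
      fix a assume "a \<in> {1..n} - {k}"
      then show "(if k < a then a - k else a + n - k) \<in> {1..n-1}" using k by auto
    next
      fix b assume b: "b \<in> {1..n-1}"
      define j where "j = (if b + k \<le> n then b + k else b + k - n)"
      have b1: "1 \<le> b" and b2: "b \<le> n - 1" using b by auto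
      have k1: "1 \<le> k" and k2: "k \<le> n" using k by auto
      have jm: "(b + k - 1) mod n + 1 = j"
      proof (cases "b + k \<le> n")
        case True
        then have "b + k - 1 < n" using b1 by arith
        then have "(b + k - 1) mod n = b + k - 1" by (rule mod_less)
        then show ?thesis unfolding j_def using True b1 by simp
      next
        case False
        then have ge: "n \<le> b + k - 1" by arith
        have lt: "b + k - 1 - n < n" using b2 k2 n2 by arith
        have "(b + k - 1) mod n = (b + k - 1 - n) mod n" using ge by (rule le_mod_geq)
        also have "\<dots> = b + k - 1 - n" using lt by (rule mod_less)
        finally show ?thesis unfolding j_def using False ge by simp
      qed
      have mj: "mcyc n m (b + k) = m j"
        unfolding mcyc_def jm ..
      have pj: "p (s - real k + real j) = p (s + real b)"
      proof (cases "b + k \<le> n")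
        case True
        then have "s - real k + real j = s + real b" unfolding j_def by simp
        then show ?thesis by (rule arg_cong)
      next
        case False
        then have "real j = real b + real k - real n" unfolding j_def by simp
        then have "s - real k + real j = (s + real b) - real n" by simp
        then have "p (s - real k + real j) = p ((s + real b) - real n)" by (rule arg_cong)
        also have "\<dots> = p ((s + real b) - real n + real n)" by (rule period[symmetric])
        also have "\<dots> = p (s + real b)" by (simp only: diff_add_cancel)
        finally show ?thesis .
      qed
      have *: "mcyc n m (b + k) *\<^sub>R G s b = (m j / (\<sigma> - \<sigma> * (odot \<sigma> (p s) (p (s - real k + real j)))^2) powr (3/2)) *\<^sub>R
             (p (s - real k + real j) - (\<sigma> * odot \<sigma> (p s) (p (s - real k + real j))) *\<^sub>R p s)"
        unfolding mj pj G_def by (simp only: odot_sym[of _ "p s"] div_scaleR)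
      from *[symmetric] show "(m (if b + k \<le> n then b + k else b + k - n) /
          (\<sigma> - \<sigma> * (odot \<sigma> (p s) (p (s - real k + real (if b + k \<le> n then b + k else b + k - n))))^2) powr (3/2)) *\<^sub>R
             (p (s - real k + real (if b + k \<le> n then b + k else b + k - n)) - (\<sigma> * odot \<sigma> (p s) (p (s - real k + real (if b + k \<le> n then b + k else b + k - n)))) *\<^sub>R p s) = mcyc n m (b + k) *\<^sub>R G s b"
        by (simp only: j_def)
    qed
    show ?thesis by (simp only: e h[symmetric] diff_add_cancel)
  qed
  have same: "A k s = A 1 s" if "k \<in> {1..n}" for k s
    using key[OF that, of s] key[of 1 s] n2 by simp
  have sumA: "(\<Sum>k\<in>{1..n}. A k s) = M *\<^sub>R (\<Sum>l\<in>{1..n-1}. G s l)" for s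
  proof -
    have "(\<Sum>k\<in>{1..n}. A k s) = (\<Sum>l\<in>{1..n-1}. (\<Sum>k\<in>{1..n}. mcyc n m (l+k)) *\<^sub>R G s l)"
      unfolding A_def scaleR_sum_left by (rule sum.swap)
    also have "\<dots> = (\<Sum>l\<in>{1..n-1}. M *\<^sub>R G s l)"
      unfolding M_def using mcyc_window[OF npos] by simp
    finally show ?thesis by (simp add: scaleR_sum_right)
  qed
  show ?thesis
  proof (intro ballI allI)
    fix k t assume k: "k \<in> {1..n}"
    have "(\<Sum>k\<in>{1..n}. A k t) = (\<Sum>k'\<in>{1..n}. A k t)"
    proof (rule sum.cong)
      fix k' assume "k' \<in> {1..n}"
      then show "A k' t = A k t" using same[of k' t] same[OF k, of t] by argo
    qed simp
    also have "(\<Sum>k'\<in>{1..n}. A k t) = real n *\<^sub>R A k t"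
      by (simp only: sum_constant_scaleR card_atLeastAtMost) simp
    finally have "(\<Sum>k\<in>{1..n}. A k t) = real n *\<^sub>R A k t" .
    then have MA: "M *\<^sub>R (\<Sum>l\<in>{1..n-1}. G t l) = real n *\<^sub>R A k t" using sumA by simp
    have "(\<Sum>j\<in>{1..n-1}.
         ((mcyc n m (j + k) - M / real n) /
            (\<sigma> - \<sigma> * (odot \<sigma> (p (t + real j)) (p t))^2) powr (3/2)) *\<^sub>R
         (p (t + real j) - (\<sigma> * odot \<sigma> (p (t + real j)) (p t)) *\<^sub>R p t))
        = (\<Sum>j\<in>{1..n-1}. (mcyc n m (j + k) - M / real n) *\<^sub>R G t j)"
      unfolding G_def by (simp only: div_scaleR)
    also have "\<dots> = (\<Sum>j\<in>{1..n-1}. mcyc n m (j + k) *\<^sub>R G t j) - (\<Sum>j\<in>{1..n-1}. (M / real n) *\<^sub>R G t j)"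
      by (simp only: scaleR_diff_left sum_subtractf)
    also have "\<dots> = A k t - (M / real n) *\<^sub>R (\<Sum>l\<in>{1..n-1}. G t l)"
      unfolding A_def by (simp only: scaleR_sum_right)
    also have "(M / real n) *\<^sub>R (\<Sum>l\<in>{1..n-1}. G t l) = (1 / real n) *\<^sub>R (M *\<^sub>R (\<Sum>l\<in>{1..n-1}. G t l))"
      by (simp only: scaleR_scaleR) simp
    also have "\<dots> = (1 / real n) *\<^sub>R (real n *\<^sub>R A k t)" by (simp only: MA)
    also have "\<dots> = A k t" using npos by (simp only: scaleR_scaleR) simp
    also have "A k t - A k t = 0" by simp
    finally show "0 = (\<Sum>j\<in>{1..n-1}.
         ((mcyc n m (j + k) - (\<Sum>i\<in>{1..n}. m i) / real n) /
            (\<sigma> - \<sigma> * (odot \<sigma> (p (t + real j)) (p t))^2) powr (3/2)) *\<^sub>R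
         (p (t + real j) - (\<sigma> * odot \<sigma> (p (t + real j)) (p t)) *\<^sub>R p t))"
      unfolding M_def by simp
  qed
qed

end
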